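(* Let $S=\{z\in\mathbb C:0<\operatorname{Im} z<1\}$. For every $M\ge1$ there is $K(M)\ge1$, with $\lim_{M\to1}K(M)=1$, such that the following holds: if $f_0,f_1\colon\mathbb R\to\mathbb R$ are diffeomorphisms with $1/M\le f_k'(x)\le M$ for $k=0,1$ and $|f_0(x)-f_1(x)|\le M-1$ for all $x\in\mathbb R$, then there exists a $K(M)$-quasiconformal map $f\colon S\to S$ whose boundary values satisfy $f(x+ik)=f_k(x)+ik$ for $k=0,1$ and all $x\in\mathbb R$. *)

theory Defs
  imports "HOL-Complex_Analysis.Complex_Analysis"
begin

definition strip :: "complex set" where
  "strip = {z. 0 < Im z \<and> Im z < 1}"

definition lin_dil :: "(complex \<Rightarrow> complex) \<Rightarrow> complex \<Rightarrow> ereal" where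
  "lin_dil f z = Limsup (at_right 0)
     (\<lambda>r. ereal ((SUP w\<in>sphere z r. cmod (f w - f z)) / (INF w\<in>sphere z r. cmod (f w - f z))))"

definition sense_preserving_on :: "complex set \<Rightarrow> (complex \<Rightarrow> complex) \<Rightarrow> bool" where
  "sense_preserving_on U f \<longleftrightarrow>
     (\<forall>z\<in>U. \<exists>e>0. \<forall>r. 0 < r \<and> r < e \<longrightarrow> winding_number (f \<circ> circlepath z r) (f z) = 1)"

text \<open>K-quasiconformal map on an open set U (metric definition; equivalent in the plane to the
  analytic definition): a sense-preserving homeomorphism onto its image whose linear dilatation
  is finite everywhere and at most K almost everywhere.\<close>
definition quasiconformal_on :: "real \<Rightarrow> complex set \<Rightarrow> (complex \<Rightarrow> complex) \<Rightarrow> bool" where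
  "quasiconformal_on K U f \<longleftrightarrow>
     K \<ge> 1 \<and> open U \<and> inj_on f U \<and> continuous_on U f \<and> continuous_on (f ` U) (inv_into U f) \<and>
     sense_preserving_on U f \<and>
     (\<forall>z\<in>U. lin_dil f z < \<infinity>) \<and>
     (AE z in lebesgue. z \<in> U \<longrightarrow> lin_dil f z \<le> ereal K)"

end

theory Submission
  imports Defs
begin

definition CC :: "real \<Rightarrow> real" where "CC M = M^2 * (M^2 - M + 1)"

lemma alg:
  fixes M A B a b :: real
  assumes M: "M \<ge> 1" and h1: "\<bar>A\<bar> \<le> M*\<bar>a\<bar>" and h2: "\<bar>a\<bar> \<le> M*\<bar>A\<bar>" and h3: "\<bar>B\<bar> \<le> (M-1)*\<bar>b\<bar>"
  shows "(A+B)^2 + b^2 \<le> CC M * (a^2+b^2)" and "a^2+b^2 \<le> CC M * ((A+B)^2 + b^2)"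
proof -
  define d where "d = M - 1"
  have d0: "d \<ge> 0" using M d_def by simp
  have ab: "2*\<bar>a\<bar>*\<bar>b\<bar> \<le> a^2+b^2"
  proof -
    have "0 \<le> (\<bar>a\<bar>-\<bar>b\<bar>)^2" by simp
    thus ?thesis by (simp add: power2_eq_square algebra_simps)
  qed
  have s: "\<bar>A+B\<bar> \<le> M*\<bar>a\<bar> + d*\<bar>b\<bar>" using h1 h3 d_def by (smt (verit) abs_triangle_ineq)
  have "(A+B)^2 \<le> (M*\<bar>a\<bar> + d*\<bar>b\<bar>)^2"
    by (metis abs_ge_zero power2_abs power_mono s)
  also have "\<dots> = M^2*a^2 + M*d*(2*\<bar>a\<bar>*\<bar>b\<bar>) + d^2*b^2"
    by (simp add: power2_eq_square algebra_simps)
  also have "\<dots> \<le> M^2*a^2 + M*d*(a^2+b^2) + d^2*b^2"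
    using ab M d0 by (simp add: mult_left_mono)
  finally have u: "(A+B)^2 + b^2 \<le> (M^2 + M*d)*a^2 + (M*d+d^2+1)*b^2"
    by (simp add: algebra_simps)
  have c1: "M^2 + M*d \<le> CC M"
  proof -
    have "CC M - (M^2 + M*d) = M*(M-1)^2*(M+1)" unfolding CC_def d_def
      by (simp add: power2_eq_square algebra_simps)
    moreover have "M*(M-1)^2*(M+1) \<ge> 0" using M by simp
    ultimately show ?thesis by linarith
  qed
  have c2: "M*d+d^2+1 \<le> M^2 + M*d"
  proof -
    have "M^2 = 1 + 2*d + d^2" unfolding d_def by (simp add: power2_eq_square algebra_simps)
    thus ?thesis using d0 by linarith
  qed
  show "(A+B)^2 + b^2 \<le> CC M * (a^2+b^2)"
    using u c1 c2 by (smt (verit) mult_right_mono zero_le_power2 distrib_left)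
  have s2: "\<bar>a\<bar> \<le> M*\<bar>A+B\<bar> + M*d*\<bar>b\<bar>"
  proof -
    have "\<bar>A\<bar> \<le> \<bar>A+B\<bar> + \<bar>B\<bar>" by linarith
    hence "M*\<bar>A\<bar> \<le> M*\<bar>A+B\<bar> + M*\<bar>B\<bar>" using M by (simp add: mult_left_mono flip: distrib_left)
    moreover have "M*\<bar>B\<bar> \<le> M*(d*\<bar>b\<bar>)" using h3 d_def M by (simp add: mult_left_mono)
    ultimately show ?thesis using h2 by (simp add: mult.assoc)
  qed
  have ab2: "2*\<bar>A+B\<bar>*\<bar>b\<bar> \<le> (A+B)^2+b^2"
  proof -
    have "0 \<le> (\<bar>A+B\<bar>-\<bar>b\<bar>)^2" by simp
    thus ?thesis by (simp add: power2_eq_square algebra_simps)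
  qed
  have "a^2 \<le> (M*\<bar>A+B\<bar> + M*d*\<bar>b\<bar>)^2"
    by (metis abs_ge_zero power2_abs power_mono s2)
  also have "\<dots> = M^2*(A+B)^2 + M^2*d*(2*\<bar>A+B\<bar>*\<bar>b\<bar>) + M^2*d^2*b^2"
    by (simp add: power2_eq_square algebra_simps)
  also have "\<dots> \<le> M^2*(A+B)^2 + M^2*d*((A+B)^2+b^2) + M^2*d^2*b^2"
    using ab2 M d0 by (simp add: mult_left_mono)
  finally have u2: "a^2 + b^2 \<le> (M^2 + M^2*d)*(A+B)^2 + (M^2*d+M^2*d^2+1)*b^2"
    by (simp add: algebra_simps)
  have c3: "M^2 + M^2*d \<le> CC M"
  proof -
    have "CC M - (M^2 + M^2*d) = M^2*(M-1)^2" unfolding CC_def d_def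
      by (simp add: power2_eq_square algebra_simps)
    thus ?thesis by (smt (verit) zero_le_power2 mult_nonneg_nonneg)
  qed
  have c4: "M^2*d+M^2*d^2+1 \<le> CC M"
  proof -
    have "CC M - (M^2*d+M^2*d^2+1) = M^2 - 1" unfolding CC_def d_def
      by (simp add: power2_eq_square algebra_simps)
    moreover have "M^2 \<ge> 1" using M by (simp add: one_le_power)
    ultimately show ?thesis by linarith
  qed
  show "a^2+b^2 \<le> CC M * ((A+B)^2 + b^2)"
    using u2 c3 c4 by (smt (verit) mult_right_mono zero_le_power2 distrib_left)
qed


lemma CC_ge_1: assumes M: "(M::real) \<ge> 1" shows "CC M \<ge> 1"
proof -
  have "M^2 \<ge> 1" using M by (simp add: one_le_power)
  moreover have "M^2 - M + 1 \<ge> 1" using M by (simp add: power2_eq_square)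
  ultimately show ?thesis unfolding CC_def using mult_mono[of 1 "M^2" 1 "M^2 - M + 1"] by simp
qed

locale qcset =
  fixes M :: real and f0 f1 f0' f1' :: "real \<Rightarrow> real"
  assumes M: "M \<ge> 1"
    and d0: "\<And>x. (f0 has_real_derivative f0' x) (at x)"
    and d1: "\<And>x. (f1 has_real_derivative f1' x) (at x)"
    and b0: "\<And>x. 1 / M \<le> f0' x \<and> f0' x \<le> M"
    and b1: "\<And>x. 1 / M \<le> f1' x \<and> f1' x \<le> M"
    and df: "\<And>x. \<bar>f0 x - f1 x\<bar> \<le> M - 1"
begin

definition hh :: "real \<Rightarrow> real \<Rightarrow> real" where "hh y x = (1 - y) * f0 x + y * f1 x"
definition FF :: "complex \<Rightarrow> complex" where
  "FF z = complex_of_real (hh (Im z) (Re z)) + \<i> * complex_of_real (Im z)"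

lemma Re_FF[simp]: "Re (FF z) = hh (Im z) (Re z)" and Im_FF[simp]: "Im (FF z) = Im z"
  by (simp_all add: FF_def)

lemma slope:
  fixes g g' :: "real \<Rightarrow> real"
  assumes d: "\<And>x. (g has_real_derivative g' x) (at x)" and b: "\<And>x. 1 / M \<le> g' x \<and> g' x \<le> M"
    and xx: "x < x'"
  shows "(x'-x)/M \<le> g x' - g x" "g x' - g x \<le> M*(x'-x)"
proof -
  obtain c where c: "g x' - g x = (x'-x) * g' c" using MVT2[OF xx, of g g'] d by blast
  have p: "x' - x > 0" using xx by simp
  have "(x'-x)/M = (x'-x) * (1/M)" by simp
  also have "\<dots> \<le> (x'-x) * g' c" using b[of c] p by (intro mult_left_mono) auto
  finally show "(x'-x)/M \<le> g x' - g x" using c by simp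
  have "(x'-x) * g' c \<le> (x'-x) * M" using b[of c] p by (intro mult_left_mono) auto
  then show "g x' - g x \<le> M*(x'-x)" using c by (simp add: mult.commute)
qed

lemma hh_slope:
  assumes y: "0 \<le> y" "y \<le> 1" and xx: "x < x'"
  shows "(x'-x)/M \<le> hh y x' - hh y x" "hh y x' - hh y x \<le> M*(x'-x)"
proof -
  note s0 = slope[OF d0 b0 xx] and s1 = slope[OF d1 b1 xx]
  have e: "hh y x' - hh y x = (1-y)*(f0 x' - f0 x) + y*(f1 x' - f1 x)"
    by (simp add: hh_def algebra_simps)
  have "(1-y)*((x'-x)/M) \<le> (1-y)*(f0 x' - f0 x)" using s0 y by (intro mult_left_mono) auto
  moreover have "y*((x'-x)/M) \<le> y*(f1 x' - f1 x)" using s1 y by (intro mult_left_mono) auto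
  moreover have "\<And>t::real. t = (1-y)*t + y*t" by (simp add: algebra_simps)
  hence "(x'-x)/M = (1-y)*((x'-x)/M) + y*((x'-x)/M)" by blast
  ultimately show "(x'-x)/M \<le> hh y x' - hh y x" unfolding e by linarith
  have "(1-y)*(f0 x' - f0 x) \<le> (1-y)*(M*(x'-x))" using s0 y by (intro mult_left_mono) auto
  moreover have "y*(f1 x' - f1 x) \<le> y*(M*(x'-x))" using s1 y by (intro mult_left_mono) auto
  moreover have "M*(x'-x) = (1-y)*(M*(x'-x)) + y*(M*(x'-x))" by (simp add: algebra_simps)
  ultimately show "hh y x' - hh y x \<le> M*(x'-x)" unfolding e by linarith
qed

lemma Mpos: "M > 0" using M by simp

lemma hh_abs:
  assumes y: "0 \<le> y" "y \<le> 1"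
  shows "\<bar>hh y x' - hh y x\<bar> \<le> M*\<bar>x'-x\<bar>" "\<bar>x'-x\<bar> \<le> M*\<bar>hh y x' - hh y x\<bar>"
proof -
  have "\<bar>hh y x' - hh y x\<bar> \<le> M*\<bar>x'-x\<bar> \<and> \<bar>x'-x\<bar> \<le> M*\<bar>hh y x' - hh y x\<bar>"
  proof (cases x x' rule: linorder_cases)
    case less
    note h = hh_slope[OF y less]
    have "x' - x \<le> M * (hh y x' - hh y x)" using h(1) Mpos by (simp add: divide_le_eq mult.commute)
    moreover have "(x'-x)/M > 0" using less Mpos by simp
    ultimately show ?thesis using h less by auto
  next
    case equal then show ?thesis by simp
  next
    case greater
    note h = hh_slope[OF y greater]
    have "x - x' \<le> M * (hh y x - hh y x')" using h(1) Mpos by (simp add: divide_le_eq mult.commute)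
    moreover have "(x-x')/M > 0" using greater Mpos by simp
    ultimately show ?thesis using h greater by (auto simp: abs_minus_commute)
  qed
  then show "\<bar>hh y x' - hh y x\<bar> \<le> M*\<bar>x'-x\<bar>" "\<bar>x'-x\<bar> \<le> M*\<bar>hh y x' - hh y x\<bar>" by auto
qed

lemma key_sq:
  assumes "0 \<le> Im z" "Im z \<le> 1" "0 \<le> Im w" "Im w \<le> 1"
  shows "(cmod (FF w - FF z))^2 \<le> CC M * (cmod (w - z))^2"
    "(cmod (w - z))^2 \<le> CC M * (cmod (FF w - FF z))^2"
proof -
  define A where "A = hh (Im w) (Re w) - hh (Im w) (Re z)"
  define B where "B = hh (Im w) (Re z) - hh (Im z) (Re z)"
  have B: "B = (Im w - Im z) * (f1 (Re z) - f0 (Re z))" unfolding B_def hh_def by (simp add: algebra_simps)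
  have hB: "\<bar>B\<bar> \<le> (M-1)*\<bar>Im w - Im z\<bar>"
  proof -
    have "\<bar>f1 (Re z) - f0 (Re z)\<bar> \<le> M-1" using df[of "Re z"] by (simp add: abs_minus_commute)
    from mult_left_mono[OF this abs_ge_zero[of "Im w - Im z"]]
    show ?thesis unfolding B by (simp add: abs_mult mult.commute)
  qed
  note h = hh_abs[of "Im w" "Re w" "Re z"]
  have e1: "(cmod (FF w - FF z))^2 = (A+B)^2 + (Im w - Im z)^2"
    by (simp add: cmod_power2 A_def B_def)
  have e2: "(cmod (w - z))^2 = (Re w - Re z)^2 + (Im w - Im z)^2"
    by (simp add: cmod_power2)
  show "(cmod (FF w - FF z))^2 \<le> CC M * (cmod (w - z))^2"
    unfolding e1 e2 using alg(1)[OF M _ _ hB] h assms unfolding A_def by auto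
  show "(cmod (w - z))^2 \<le> CC M * (cmod (FF w - FF z))^2"
    unfolding e1 e2 using alg(2)[OF M _ _ hB] h assms unfolding A_def by auto
qed


lemma CC_ge1: "CC M \<ge> 1" by (rule CC_ge_1[OF M])

lemma key_norm:
  assumes "0 \<le> Im z" "Im z \<le> 1" "0 \<le> Im w" "Im w \<le> 1"
  shows "cmod (FF w - FF z) \<le> sqrt (CC M) * cmod (w - z)"
    "cmod (w - z) \<le> sqrt (CC M) * cmod (FF w - FF z)"
proof -
  have "sqrt ((cmod (FF w - FF z))^2) \<le> sqrt (CC M * (cmod (w - z))^2)"
    using key_sq(1)[OF assms] real_sqrt_le_mono by blast
  then show "cmod (FF w - FF z) \<le> sqrt (CC M) * cmod (w - z)" by (simp add: real_sqrt_mult)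
  have "sqrt ((cmod (w - z))^2) \<le> sqrt (CC M * (cmod (FF w - FF z))^2)"
    using key_sq(2)[OF assms] real_sqrt_le_mono by blast
  then show "cmod (w - z) \<le> sqrt (CC M) * cmod (FF w - FF z)" by (simp add: real_sqrt_mult)
qed

lemma cont0: "continuous_on UNIV f0"
proof (intro continuous_at_imp_continuous_on ballI)
  fix x show "isCont f0 x" by (rule DERIV_isCont[OF d0])
qed

lemma cont1: "continuous_on UNIV f1"
proof (intro continuous_at_imp_continuous_on ballI)
  fix x show "isCont f1 x" by (rule DERIV_isCont[OF d1])
qed

lemma isCont_FF: "isCont FF z"
proof -
  have r: "isCont Re z" using isCont_Re[OF continuous_ident[of z UNIV]] by simp
  have i: "isCont Im z" using isCont_Im[OF continuous_ident[of z UNIV]] by simp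
  have c0: "isCont (\<lambda>z. f0 (Re z)) z" by (rule isCont_o2[OF r DERIV_isCont[OF d0]])
  have c1: "isCont (\<lambda>z. f1 (Re z)) z" by (rule isCont_o2[OF r DERIV_isCont[OF d1]])
  show ?thesis unfolding FF_def hh_def
    by (intro continuous_intros c0 c1 i)
qed

lemma cont_FF: "continuous_on A FF"
  by (simp add: continuous_at_imp_continuous_on isCont_FF)

lemma hh_mono: assumes "0 \<le> y" "y \<le> 1" "x < x'" shows "hh y x < hh y x'"
proof -
  have "(x'-x)/M > 0" using assms Mpos by simp
  then show ?thesis using hh_slope[OF assms] by linarith
qed

lemma image_FF: "FF ` strip = strip"
proof
  show "FF ` strip \<subseteq> strip" by (auto simp: strip_def)
  show "strip \<subseteq> FF ` strip"
  proof
    fix u assume u: "u \<in> strip"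
    define y where "y = Im u"
    have y: "0 \<le> y" "y \<le> 1" using u by (auto simp: strip_def y_def)
    define X where "X = M * (\<bar>Re u\<bar> + \<bar>hh y 0\<bar>) + 1"
    have X: "X > 0" unfolding X_def using Mpos
      by (smt (verit) mult_nonneg_nonneg abs_ge_zero)
    have "X / M \<le> hh y X - hh y 0" using hh_slope(1)[OF y X] by simp
    moreover have "X / M \<ge> \<bar>Re u\<bar> + \<bar>hh y 0\<bar>" unfolding X_def using Mpos by (simp add: field_simps)
    ultimately have up: "Re u \<le> hh y X" by linarith
    have "(0 - (-X)) / M \<le> hh y 0 - hh y (-X)" using hh_slope(1)[OF y, of "-X" 0] X by simp
    moreover have "X / M \<ge> \<bar>Re u\<bar> + \<bar>hh y 0\<bar>" unfolding X_def using Mpos by (simp add: field_simps)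
    ultimately have lo: "hh y (-X) \<le> Re u" by simp
    have ch: "continuous_on {-X..X} (hh y)" unfolding hh_def
      by (intro continuous_intros continuous_on_subset[OF cont0] continuous_on_subset[OF cont1]) auto
    obtain x where x: "hh y x = Re u" using IVT'[of "hh y" "-X" "Re u" X, OF lo up _ ch] X by auto
    have "FF (Complex x y) = u" using x by (simp add: complex_eq_iff y_def)
    moreover have "Complex x y \<in> strip" using u by (simp add: strip_def y_def)
    ultimately show "u \<in> FF ` strip" by blast
  qed
qed

lemma inj_FF: "inj_on FF strip"
proof (rule inj_onI)
  fix z w assume z: "z \<in> strip" and w: "w \<in> strip" and e: "FF z = FF w"
  have "cmod (w - z) \<le> sqrt (CC M) * cmod (FF w - FF z)"
    by (rule key_norm(2)) (use z w in \<open>auto simp: strip_def\<close>)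
  then show "z = w" using e by simp
qed

lemma inv_cont: "continuous_on (FF ` strip) (inv_into strip FF)"
  unfolding continuous_on_iff
proof (intro ballI allI impI)
  fix u e assume u: "u \<in> FF ` strip" and e: "(e::real) > 0"
  obtain z where z: "z \<in> strip" "u = FF z" using u by blast
  have sC: "sqrt (CC M) > 0" using CC_ge1 by simp
  show "\<exists>d>0. \<forall>u'\<in>FF ` strip. dist u' u < d \<longrightarrow> dist (inv_into strip FF u') (inv_into strip FF u) < e"
  proof (intro exI[of _ "e / sqrt (CC M)"] conjI ballI impI)
    show "e / sqrt (CC M) > 0" using e sC by simp
    fix u' assume u': "u' \<in> FF ` strip" and dd: "dist u' u < e / sqrt (CC M)"
    obtain w where w: "w \<in> strip" "u' = FF w" using u' by blast
    have i1: "inv_into strip FF u' = w" using w inj_FF by (simp add: inv_into_f_f)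
    have i2: "inv_into strip FF u = z" using z inj_FF by (simp add: inv_into_f_f)
    have "cmod (w - z) \<le> sqrt (CC M) * cmod (FF w - FF z)"
      by (rule key_norm(2)) (use z w in \<open>auto simp: strip_def\<close>)
    also have "\<dots> < sqrt (CC M) * (e / sqrt (CC M))"
    proof -
      have "cmod (FF w - FF z) < e / sqrt (CC M)" using dd w z by (simp add: dist_norm)
      from mult_strict_left_mono[OF this sC] show ?thesis .
    qed
    also have "\<dots> = e" using sC by simp
    finally show "dist (inv_into strip FF u') (inv_into strip FF u) < e"
      by (simp add: i1 i2 dist_norm)
  qed
qed


lemma lin_dil_le: assumes z: "z \<in> strip" shows "lin_dil FF z \<le> ereal (CC M)"
  unfolding lin_dil_def
proof (rule Limsup_bounded)
  define \<rho> where "\<rho> = min (Im z) (1 - Im z)"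
  have \<rho>: "\<rho> > 0" using z by (simp add: strip_def \<rho>_def)
  define sC where "sC = sqrt (CC M)"
  have sC: "sC > 0" using CC_ge1 by (simp add: sC_def)
  have sC2: "sC * sC = CC M" using CC_ge1 by (simp add: sC_def)
  show "eventually (\<lambda>r. ereal ((SUP w\<in>sphere z r. cmod (FF w - FF z)) / (INF w\<in>sphere z r. cmod (FF w - FF z))) \<le> ereal (CC M)) (at_right 0)"
    unfolding eventually_at_right_field
  proof (intro exI[of _ \<rho>] conjI allI impI)
    show "\<rho> > 0" by (rule \<rho>)
    fix r :: real assume r: "r > 0" "r < \<rho>"
    have ne: "sphere z r \<noteq> {}" using r by simp
    have bnd: "cmod (FF w - FF z) \<le> sC * r \<and> r / sC \<le> cmod (FF w - FF z)" if w: "w \<in> sphere z r" for w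
    proof -
      have n: "cmod (w - z) = r" using w by (simp add: dist_norm norm_minus_commute)
      have "\<bar>Im (w - z)\<bar> \<le> cmod (w - z)" by (rule abs_Im_le_cmod)
      hence "\<bar>Im w - Im z\<bar> < \<rho>" using n r by simp
      hence iw: "0 \<le> Im w" "Im w \<le> 1" unfolding \<rho>_def by auto
      have iz: "0 \<le> Im z" "Im z \<le> 1" using z by (auto simp: strip_def)
      note k = key_norm[OF iz iw]
      have "r \<le> sC * cmod (FF w - FF z)" using k(2) n by (simp add: sC_def)
      hence "r / sC \<le> cmod (FF w - FF z)" using sC by (simp add: divide_le_eq mult.commute)
      then show ?thesis using k(1) n by (simp add: sC_def)
    qed
    have S: "(SUP w\<in>sphere z r. cmod (FF w - FF z)) \<le> sC * r"
      by (rule cSUP_least[OF ne]) (use bnd in blast)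
    have I: "r / sC \<le> (INF w\<in>sphere z r. cmod (FF w - FF z))"
      by (rule cINF_greatest[OF ne]) (use bnd in blast)
    have "(SUP w\<in>sphere z r. cmod (FF w - FF z)) / (INF w\<in>sphere z r. cmod (FF w - FF z)) \<le> (sC * r) / (r / sC)"
      by (rule frac_le[OF _ S _ I]) (use sC r in auto)
    also have "\<dots> = CC M" using sC r sC2 by (simp add: field_simps)
    finally show "ereal ((SUP w\<in>sphere z r. cmod (FF w - FF z)) / (INF w\<in>sphere z r. cmod (FF w - FF z))) \<le> ereal (CC M)"
      by simp
  qed
qed

lemma sense: "sense_preserving_on strip FF"
  unfolding sense_preserving_on_def
proof (intro ballI exI[of _ 1] conjI allI impI)
  fix z r assume z: "z \<in> strip" and r: "0 < r \<and> r < (1::real)"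
  have iz: "0 \<le> Im z" "Im z \<le> 1" using z by (auto simp: strip_def)
  have "winding_number (FF \<circ> circlepath z r) (FF z) = winding_number (circlepath (FF z) r) (FF z)"
  proof (rule winding_number_loops_linear_eq)
    show "path (circlepath (FF z) r)" by simp
    show "path (FF \<circ> circlepath z r)" by (rule path_continuous_image) (auto intro: cont_FF)
    show "pathfinish (circlepath (FF z) r) = pathstart (circlepath (FF z) r)" by simp
    show "pathfinish (FF \<circ> circlepath z r) = pathstart (FF \<circ> circlepath z r)"
      by (simp add: pathfinish_compose pathstart_compose)
    fix t :: real assume t: "t \<in> {0..1}"
    define w where "w = circlepath z r t"
    have g: "circlepath (FF z) r t = FF z + (w - z)" unfolding w_def circlepath by simp
    have nw: "cmod (w - z) = r" unfolding w_def circlepath using r by (simp add: norm_mult)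
    show "FF z \<notin> closed_segment (circlepath (FF z) r t) ((FF \<circ> circlepath z r) t)"
    proof
      assume "FF z \<in> closed_segment (circlepath (FF z) r t) ((FF \<circ> circlepath z r) t)"
      then obtain u :: real where u: "0 \<le> u" "u \<le> 1"
        and e: "FF z = (1 - u) *\<^sub>R (FF z + (w - z)) + u *\<^sub>R FF w"
        unfolding closed_segment_def g by (auto simp: w_def)
      have eI: "Im (FF z) = Im ((1 - u) *\<^sub>R (FF z + (w - z)) + u *\<^sub>R FF w)" using e by simp
      hence imw: "Im w = Im z" by (simp add: algebra_simps)
      have eR: "Re (FF z) = Re ((1 - u) *\<^sub>R (FF z + (w - z)) + u *\<^sub>R FF w)" using e by simp
      define a where "a = Re w - Re z"
      define D where "D = hh (Im z) (Re w) - hh (Im z) (Re z)"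
      have eq0: "(1-u)*a + u*D = 0" using eR imw unfolding a_def D_def by (simp add: algebra_simps)
      have "a \<noteq> 0"
      proof
        assume "a = 0"
        hence "w = z" using imw by (simp add: a_def complex_eq_iff)
        thus False using nw r by simp
      qed
      have Da: "D * a > 0"
      proof (cases "Re z < Re w")
        case True
        then have "D > 0" using hh_mono[OF iz True] by (simp add: D_def)
        then show ?thesis using True by (simp add: a_def)
      next
        case False
        with \<open>a \<noteq> 0\<close> have lt: "Re w < Re z" by (simp add: a_def)
        then have "D < 0" using hh_mono[OF iz lt] by (simp add: D_def)
        then show ?thesis using lt by (simp add: a_def mult_neg_neg)
      qed
      have "((1-u)*a + u*D) * a = (1-u)*(a*a) + u*(D*a)" by (simp add: algebra_simps)
      moreover have "(1-u)*(a*a) + u*(D*a) > 0"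
      proof (cases "u = 1")
        case True then show ?thesis using Da by simp
      next
        case False
        have aa: "0 < a*a" using \<open>a \<noteq> 0\<close> by (cases "a > 0") (auto simp: mult_neg_neg)
        have "1 - u > 0" using u False by simp
        from mult_pos_pos[OF this aa] have "(1-u)*(a*a) > 0" .
        moreover have "u*(D*a) \<ge> 0" using u Da by simp
        ultimately show ?thesis by linarith
      qed
      ultimately show False using eq0 by simp
    qed
  qed
  also have "\<dots> = 1" using r by (simp add: winding_number_circlepath_centre)
  finally show "winding_number (FF \<circ> circlepath z r) (FF z) = 1" .
qed (simp)

end


theorem lemma1:
  shows "\<exists>K :: real \<Rightarrow> real. (\<forall>M\<ge>1. K M \<ge> 1) \<and> (K \<longlongrightarrow> 1) (at_right 1) \<and>
    (\<forall>M f0 f1 f0' f1'. M \<ge> 1 \<and>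
       bij (f0 :: real \<Rightarrow> real) \<and> bij (f1 :: real \<Rightarrow> real) \<and>
       (\<forall>x. (f0 has_real_derivative f0' x) (at x)) \<and> continuous_on UNIV f0' \<and>
       (\<forall>x. (f1 has_real_derivative f1' x) (at x)) \<and> continuous_on UNIV f1' \<and>
       (\<forall>x. 1 / M \<le> f0' x \<and> f0' x \<le> M) \<and> (\<forall>x. 1 / M \<le> f1' x \<and> f1' x \<le> M) \<and>
       (\<forall>x. \<bar>f0 x - f1 x\<bar> \<le> M - 1)
     \<longrightarrow> (\<exists>f :: complex \<Rightarrow> complex.
            quasiconformal_on (K M) strip f \<and> f ` strip = strip \<and>
            continuous_on (closure strip) f \<and>
            (\<forall>x. f (complex_of_real x) = complex_of_real (f0 x)) \<and>
            (\<forall>x. f (complex_of_real x + \<i>) = complex_of_real (f1 x) + \<i>)))"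
proof (intro exI[of _ CC] conjI allI impI)
  show "\<And>M. 1 \<le> M \<Longrightarrow> 1 \<le> CC M" by (rule CC_ge_1)
  have "((\<lambda>M::real. M^2 * (M^2 - M + 1)) \<longlongrightarrow> 1^2 * (1^2 - 1 + 1)) (at_right 1)"
    by (intro tendsto_intros)
  then show "(CC \<longlongrightarrow> 1) (at_right 1)" by (simp add: CC_def[abs_def])
next
  fix M f0 f1 f0' f1'
  assume H: "M \<ge> 1 \<and>
       bij (f0 :: real \<Rightarrow> real) \<and> bij (f1 :: real \<Rightarrow> real) \<and>
       (\<forall>x. (f0 has_real_derivative f0' x) (at x)) \<and> continuous_on UNIV f0' \<and>
       (\<forall>x. (f1 has_real_derivative f1' x) (at x)) \<and> continuous_on UNIV f1' \<and>
       (\<forall>x. 1 / M \<le> f0' x \<and> f0' x \<le> M) \<and> (\<forall>x. 1 / M \<le> f1' x \<and> f1' x \<le> M) \<and>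
       (\<forall>x. \<bar>f0 x - f1 x\<bar> \<le> M - 1)"
  interpret q: qcset M f0 f1 f0' f1' using H by unfold_locales auto
  have op: "open strip"
  proof -
    have "strip = {z. Im z > 0} \<inter> {z. Im z < 1}" by (auto simp: strip_def)
    show ?thesis unfolding \<open>strip = _\<close> by (intro open_Int open_halfspace_Im_gt open_halfspace_Im_lt)
  qed
  have qc: "quasiconformal_on (CC M) strip q.FF"
    unfolding quasiconformal_on_def
  proof (intro conjI ballI)
    show "1 \<le> CC M" by (rule q.CC_ge1)
    show "open strip" by (rule op)
    show "inj_on q.FF strip" by (rule q.inj_FF)
    show "continuous_on strip q.FF" by (rule q.cont_FF)
    show "continuous_on (q.FF ` strip) (inv_into strip q.FF)" by (rule q.inv_cont)
    show "sense_preserving_on strip q.FF" by (rule q.sense)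
    fix z assume "z \<in> strip"
    then have le: "lin_dil q.FF z \<le> ereal (CC M)" by (rule q.lin_dil_le)
    have "ereal (CC M) < \<infinity>" by simp
    with le show "lin_dil q.FF z < \<infinity>" by (rule le_less_trans)
  next
    show "AE z in lebesgue. z \<in> strip \<longrightarrow> lin_dil q.FF z \<le> ereal (CC M)"
      by (intro AE_I2 impI q.lin_dil_le)
  qed
  show "\<exists>f. quasiconformal_on (CC M) strip f \<and> f ` strip = strip \<and>
            continuous_on (closure strip) f \<and>
            (\<forall>x. f (complex_of_real x) = complex_of_real (f0 x)) \<and>
            (\<forall>x. f (complex_of_real x + \<i>) = complex_of_real (f1 x) + \<i>)"
  proof (intro exI[of _ q.FF] conjI allI)
    show "quasiconformal_on (CC M) strip q.FF" by (rule qc)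
    show "q.FF ` strip = strip" by (rule q.image_FF)
    show "continuous_on (closure strip) q.FF" by (rule q.cont_FF)
    fix x
    show "q.FF (complex_of_real x) = complex_of_real (f0 x)"
      by (simp add: complex_eq_iff q.hh_def)
    show "q.FF (complex_of_real x + \<i>) = complex_of_real (f1 x) + \<i>"
      by (simp add: complex_eq_iff q.hh_def)
  qed
qed

end
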